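(* Let $H=K_{K_{1,3},K_{1,4}}$ be the join of a star with $3$ leaves and a star with $4$ leaves. Then every proper edge-colouring of $H$ contains a rainbow copy of $K_4$.
   Context: For vertex-disjoint graphs $L,R$, the join $K_{L,R}$ has vertex set $V(L)\cup V(R)$ and edge set $E(L)\cup E(R)\cup\{uv: u\in V(L), v\in V(R)\}$. A subgraph is rainbow under an edge-colouring if all its edges receive distinct colours. *)

theory Defs
  imports Main
begin

text \<open>A (simple) graph is a pair (V, E) with E a set of 2-element subsets of V.\<close>
type_synonym 'a graph = "'a set \<times> 'a set set"

definition star :: "nat \<Rightarrow> nat graph" where
  "star n = ({0..n}, {{0, i} | i. i \<in> {1..n}})"

text \<open>Join of two graphs, made vertex-disjoint via the sum type.\<close>
definition join :: "'a graph \<Rightarrow> 'b graph \<Rightarrow> ('a + 'b) graph" where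
  "join L R = (Inl ` fst L \<union> Inr ` fst R,
     ((\<lambda>e. Inl ` e) ` snd L) \<union> ((\<lambda>e. Inr ` e) ` snd R)
     \<union> {{Inl u, Inr v} | u v. u \<in> fst L \<and> v \<in> fst R})"

definition proper_edge_colouring :: "'a graph \<Rightarrow> ('a set \<Rightarrow> 'c) \<Rightarrow> bool" where
  "proper_edge_colouring G c \<longleftrightarrow>
     (\<forall>e\<in>snd G. \<forall>f\<in>snd G. e \<noteq> f \<and> e \<inter> f \<noteq> {} \<longrightarrow> c e \<noteq> c f)"

definition has_rainbow_K4 :: "'a graph \<Rightarrow> ('a set \<Rightarrow> 'c) \<Rightarrow> bool" where
  "has_rainbow_K4 G c \<longleftrightarrow>
     (\<exists>S. S \<subseteq> fst G \<and> card S = 4 \<and>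
        (\<forall>u\<in>S. \<forall>v\<in>S. u \<noteq> v \<longrightarrow> {u, v} \<in> snd G) \<and>
        inj_on c {{u, v} | u v. u \<in> S \<and> v \<in> S \<and> u \<noteq> v})"

end

theory Submission
  imports Defs
begin

abbreviation "HH \<equiv> join (star 3) (star 4)"

lemma memLL: "i \<in> {1..3} \<Longrightarrow> {Inl 0, Inl i} \<in> snd HH"
proof -
  assume "i \<in> {1..3}"
  then have "{0, i} \<in> snd (star 3)" unfolding star_def by auto
  then have "Inl ` {0, i} \<in> (\<lambda>e. Inl ` e) ` snd (star 3)" by blast
  then show ?thesis unfolding join_def by (simp only: image_insert image_empty snd_conv) blast
qed

lemma memRR: "j \<in> {1..4} \<Longrightarrow> {Inr 0, Inr j} \<in> snd HH"
proof -
  assume "j \<in> {1..4}"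
  then have "{0, j} \<in> snd (star 4)" unfolding star_def by auto
  then have "Inr ` {0, j} \<in> (\<lambda>e. Inr ` e) ` snd (star 4)" by blast
  then show ?thesis unfolding join_def by (simp only: image_insert image_empty snd_conv) blast
qed

lemma memLR: "u \<le> 3 \<Longrightarrow> v \<le> 4 \<Longrightarrow> {Inl u, Inr v} \<in> snd HH"
  unfolding join_def star_def by auto

lemma memLR': "u \<le> 3 \<Longrightarrow> v \<le> 4 \<Longrightarrow> {Inr v, Inl u} \<in> snd HH"
  using memLR by (metis insert_commute)

lemma vert: "u \<le> 3 \<Longrightarrow> Inl u \<in> fst HH" "v \<le> 4 \<Longrightarrow> Inr v \<in> fst HH"
  unfolding join_def star_def by auto

lemma pr: "proper_edge_colouring G c \<Longrightarrow> e \<in> snd G \<Longrightarrow> f \<in> snd G \<Longrightarrow> e \<noteq> f \<Longrightarrow> x \<in> e \<Longrightarrow> x \<in> f \<Longrightarrow> c e \<noteq> c f"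
  unfolding proper_edge_colouring_def by blast

lemma good:
  fixes c :: "(nat + nat) set \<Rightarrow> 'c"
  assumes P: "proper_edge_colouring HH c" and j: "j \<in> {1..4}"
    and h1: "c {Inl 0, Inl 1} \<noteq> c {Inr 0, Inr j}"
    and h2: "c {Inl 0, Inr 0} \<noteq> c {Inl 1, Inr j}"
    and h3: "c {Inl 0, Inr j} \<noteq> c {Inl 1, Inr 0}"
  shows "has_rainbow_K4 HH c"
proof -
  let ?S = "{Inl 0, Inl 1, Inr 0, Inr j} :: (nat + nat) set"
  have j0: "j \<noteq> 0" "j \<le> 4" using j by auto
  have E: "{{u, v} | u v. u \<in> ?S \<and> v \<in> ?S \<and> u \<noteq> v} =
     {{Inl 0, Inl 1}, {Inr 0, Inr j}, {Inl 0, Inr 0}, {Inl 1, Inr j}, {Inl 0, Inr j}, {Inl 1, Inr 0}}"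
    using j0 by auto
  have e1: "{Inl 0, Inl 1} \<in> snd HH" by (rule memLL) auto
  have e2: "{Inr 0, Inr j} \<in> snd HH" using j by (rule memRR)
  have e3: "{Inl 0, Inr 0} \<in> snd HH" by (rule memLR) auto
  have e4: "{Inl 1, Inr j} \<in> snd HH" using j0 by (intro memLR) auto
  have e5: "{Inl 0, Inr j} \<in> snd HH" using j0 by (intro memLR) auto
  have e6: "{Inl 1, Inr 0} \<in> snd HH" by (rule memLR) auto
  note q = pr[OF P]
  have a12: "c {Inl 0, Inl 1} \<noteq> c {Inl 0, Inr 0}" by (rule q[OF e1 e3, of "Inl 0"]) (auto simp: doubleton_eq_iff)
  have a14: "c {Inl 0, Inl 1} \<noteq> c {Inl 1, Inr j}" by (rule q[OF e1 e4, of "Inl 1"]) (auto simp: doubleton_eq_iff)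
  have a15: "c {Inl 0, Inl 1} \<noteq> c {Inl 0, Inr j}" by (rule q[OF e1 e5, of "Inl 0"]) (auto simp: doubleton_eq_iff)
  have a16: "c {Inl 0, Inl 1} \<noteq> c {Inl 1, Inr 0}" by (rule q[OF e1 e6, of "Inl 1"]) (auto simp: doubleton_eq_iff)
  have a23: "c {Inr 0, Inr j} \<noteq> c {Inl 0, Inr 0}" by (rule q[OF e2 e3, of "Inr 0"]) (use j0 in \<open>auto simp: doubleton_eq_iff\<close>)
  have a24: "c {Inr 0, Inr j} \<noteq> c {Inl 1, Inr j}" by (rule q[OF e2 e4, of "Inr j"]) (use j0 in \<open>auto simp: doubleton_eq_iff\<close>)
  have a25: "c {Inr 0, Inr j} \<noteq> c {Inl 0, Inr j}" by (rule q[OF e2 e5, of "Inr j"]) (use j0 in \<open>auto simp: doubleton_eq_iff\<close>)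
  have a26: "c {Inr 0, Inr j} \<noteq> c {Inl 1, Inr 0}" by (rule q[OF e2 e6, of "Inr 0"]) (use j0 in \<open>auto simp: doubleton_eq_iff\<close>)
  have a35: "c {Inl 0, Inr 0} \<noteq> c {Inl 0, Inr j}" by (rule q[OF e3 e5, of "Inl 0"]) (use j0 in \<open>auto simp: doubleton_eq_iff\<close>)
  have a36: "c {Inl 0, Inr 0} \<noteq> c {Inl 1, Inr 0}" by (rule q[OF e3 e6, of "Inr 0"]) (use j0 in \<open>auto simp: doubleton_eq_iff\<close>)
  have a45: "c {Inl 1, Inr j} \<noteq> c {Inl 0, Inr j}" by (rule q[OF e4 e5, of "Inr j"]) (use j0 in \<open>auto simp: doubleton_eq_iff\<close>)
  have a46: "c {Inl 1, Inr j} \<noteq> c {Inl 1, Inr 0}" by (rule q[OF e4 e6, of "Inl 1"]) (use j0 in \<open>auto simp: doubleton_eq_iff\<close>)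
  have inj: "inj_on c {{Inl 0, Inl 1}, {Inr 0, Inr j}, {Inl 0, Inr 0}, {Inl 1, Inr j}, {Inl 0, Inr j}, {Inl 1, Inr 0}}"
    using a12 a14 a15 a16 a23 a24 a25 a26 a35 a36 a45 a46 h1 h2 h3
    by (simp add: inj_on_def)
  have card: "card ?S = 4" using j0 by simp
  have sub: "?S \<subseteq> fst HH" using vert j0 by auto
  have adj: "\<forall>u\<in>?S. \<forall>v\<in>?S. u \<noteq> v \<longrightarrow> {u, v} \<in> snd HH"
    using e1 e2 e3 e4 e5 e6 by (auto simp: insert_commute)
  show ?thesis unfolding has_rainbow_K4_def
  proof (intro exI[of _ ?S] conjI)
    show "inj_on c {{u, v} | u v. u \<in> ?S \<and> v \<in> ?S \<and> u \<noteq> v}"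
      unfolding E by (rule inj)
  qed (fact card sub adj)+
qed

lemma comb:
  fixes R A B :: "nat \<Rightarrow> 'c"
  assumes b: "\<And>j. j \<in> {1..4} \<Longrightarrow> p = R j \<or> q = A j \<or> B j = r"
    and d: "\<And>j k. j \<in> {1..4} \<Longrightarrow> k \<in> {1..4} \<Longrightarrow> j \<noteq> k \<Longrightarrow> R j \<noteq> R k \<and> A j \<noteq> A k \<and> B j \<noteq> B k"
  shows False
proof -
  have m: "(1::nat) \<in> {1..4}" "(2::nat) \<in> {1..4}" "(3::nat) \<in> {1..4}" "(4::nat) \<in> {1..4}" by auto
  have "p = R 1 \<or> q = A 1 \<or> B 1 = r" "p = R 2 \<or> q = A 2 \<or> B 2 = r"
    "p = R 3 \<or> q = A 3 \<or> B 3 = r" "p = R 4 \<or> q = A 4 \<or> B 4 = r"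
    using b m by auto
  moreover have "R 1 \<noteq> R 2 \<and> A 1 \<noteq> A 2 \<and> B 1 \<noteq> B 2" "R 1 \<noteq> R 3 \<and> A 1 \<noteq> A 3 \<and> B 1 \<noteq> B 3"
    "R 1 \<noteq> R 4 \<and> A 1 \<noteq> A 4 \<and> B 1 \<noteq> B 4" "R 2 \<noteq> R 3 \<and> A 2 \<noteq> A 3 \<and> B 2 \<noteq> B 3"
    "R 2 \<noteq> R 4 \<and> A 2 \<noteq> A 4 \<and> B 2 \<noteq> B 4" "R 3 \<noteq> R 4 \<and> A 3 \<noteq> A 4 \<and> B 3 \<noteq> B 4"
    using d m by auto
  ultimately show False by metis
qed

theorem mainTheorem6:
  fixes c :: "(nat + nat) set \<Rightarrow> 'c"
  assumes "proper_edge_colouring (join (star 3) (star 4)) c"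
  shows "has_rainbow_K4 (join (star 3) (star 4)) c"
proof (rule ccontr)
  assume N: "\<not> ?thesis"
  note q = pr[OF assms]
  have bad: "\<And>j. j \<in> {1..4} \<Longrightarrow> c {Inl 0, Inl 1} = c {Inr 0, Inr j} \<or>
     c {Inl 0, Inr 0} = c {Inl 1, Inr j} \<or> c {Inl 0, Inr j} = c {Inl 1, Inr 0}"
    using good[OF assms] N by blast
  have d: "\<And>j k. j \<in> {1..4} \<Longrightarrow> k \<in> {1..4} \<Longrightarrow> j \<noteq> k \<Longrightarrow>
      c {Inr 0, Inr j} \<noteq> c {Inr 0, Inr k} \<and> c {Inl 1, Inr j} \<noteq> c {Inl 1, Inr k}
      \<and> c {Inl 0, Inr j} \<noteq> c {Inl 0, Inr k}"
  proof -
    fix j k :: nat assume jk: "j \<in> {1..4}" "k \<in> {1..4}" "j \<noteq> k"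
    show "?thesis j k"
      using q[OF memRR[OF jk(1)] memRR[OF jk(2)], of "Inr 0"]
        q[OF memLR[of 1 j] memLR[of 1 k], of "Inl 1"]
        q[OF memLR[of 0 j] memLR[of 0 k], of "Inl 0"] jk
      by (auto simp: doubleton_eq_iff)
  qed
  show False
    by (rule comb[where R="\<lambda>j. c {Inr 0, Inr j}" and A="\<lambda>j. c {Inl 1, Inr j}"
        and B="\<lambda>j. c {Inl 0, Inr j}", OF bad d])
qed

end
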